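(* Let $1\le p<\infty$, $N\ge2$, and let $T_i=T_{f_i,\omega^{(i)}}$ ($1\le i\le N$) be unilateral pseudo-shifts on $\ell^p(\mathbb{N})$. Then $T_1,\dots,T_N$ are s-hypercyclic if and only if they are densely s-hypercyclic.
   Context: $\{e_m\}$ is the canonical basis of $\ell^p(\mathbb{N})$ over $\mathbb{K}\in\{\mathbb{R},\mathbb{C}\}$. For a strictly increasing $f:\mathbb{N}\to\mathbb{N}$ with $f(1)>1$ and a bounded, nonzero sequence of scalars $\omega=(w_{f(m)})_m$, $T_{f,\omega}(\sum_m\alpha_me_m)=\sum_mw_{f(m)}\alpha_{f(m)}e_m$. A vector $x$ is s-hypercyclic for operators $T_1,\dots,T_N$ on $X$ if the closure of $\{(T_1^nx,\dots,T_N^nx):n\in\mathbb{N}\}$ contains the diagonal $\{(y,\dots,y):y\in X\}$ of $\oplus_{i=1}^NX$; the operators are s-hypercyclic if such $x$ exists, and densely s-hypercyclic if the set of such $x$ is dense. *)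

theory Defs
  imports "HOL-Analysis.Analysis"
begin

text \<open>Sequences are indexed by \<nat> = {1,2,...}; we use nat \<Rightarrow> 'a and require the (unused)
  coordinate 0 to vanish.\<close>

definition lp_space :: "real \<Rightarrow> (nat \<Rightarrow> 'a::real_normed_vector) set" where
  "lp_space p = {x. x 0 = 0 \<and> summable (\<lambda>m. norm (x m) powr p)}"

definition lp_norm :: "real \<Rightarrow> (nat \<Rightarrow> 'a::real_normed_vector) \<Rightarrow> real" where
  "lp_norm p x = (\<Sum>m. norm (x m) powr p) powr (1 / p)"

definition pseudo_shift :: "(nat \<Rightarrow> nat) \<Rightarrow> (nat \<Rightarrow> 'a::real_normed_field)
    \<Rightarrow> (nat \<Rightarrow> 'a) \<Rightarrow> (nat \<Rightarrow> 'a)" where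
  "pseudo_shift f w x = (\<lambda>m. if m = 0 then 0 else w (f m) * x (f m))"

definition pseudo_shift_data :: "(nat \<Rightarrow> nat) \<Rightarrow> (nat \<Rightarrow> 'a::real_normed_field) \<Rightarrow> bool" where
  "pseudo_shift_data f w \<longleftrightarrow> strict_mono_on {1..} f \<and> f 1 > 1 \<and>
     (\<exists>B. \<forall>m\<ge>1. norm (w (f m)) \<le> B) \<and> (\<forall>m\<ge>1. w (f m) \<noteq> 0)"

text \<open>x is s-hypercyclic for T_0,...,T_{N-1} on \<ell>^p: the closure of
  {(T_1^n x,...,T_N^n x) : n \<in> \<nat>} in the direct sum contains the diagonal.\<close>
definition s_hypercyclic_vector :: "real \<Rightarrow> nat \<Rightarrow> (nat \<Rightarrow> (nat \<Rightarrow> 'a::real_normed_vector) \<Rightarrow> (nat \<Rightarrow> 'a))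
    \<Rightarrow> (nat \<Rightarrow> 'a) \<Rightarrow> bool" where
  "s_hypercyclic_vector p N T x \<longleftrightarrow> x \<in> lp_space p \<and>
     (\<forall>y \<in> lp_space p. \<forall>e > 0. \<exists>n\<ge>1. \<forall>i<N. lp_norm p ((T i ^^ n) x - y) < e)"

definition s_hypercyclic :: "real \<Rightarrow> nat \<Rightarrow> (nat \<Rightarrow> (nat \<Rightarrow> 'a::real_normed_vector) \<Rightarrow> (nat \<Rightarrow> 'a)) \<Rightarrow> bool" where
  "s_hypercyclic p N T \<longleftrightarrow> (\<exists>x. s_hypercyclic_vector p N T x)"

definition densely_s_hypercyclic :: "real \<Rightarrow> nat \<Rightarrow> (nat \<Rightarrow> (nat \<Rightarrow> 'a::real_normed_vector) \<Rightarrow> (nat \<Rightarrow> 'a)) \<Rightarrow> bool" where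
  "densely_s_hypercyclic p N T \<longleftrightarrow>
     (\<forall>z \<in> lp_space p. \<forall>e > 0. \<exists>x. s_hypercyclic_vector p N T x \<and> lp_norm p (x - z) < e)"

end

theory Submission
  imports Defs
begin

lemma zero_powr_real: "(0::real) powr a = 0" by simp

lemma lp_diff:
  fixes u v :: "nat \<Rightarrow> 'a::real_normed_vector"
  assumes p: "p > 0" and u: "u \<in> lp_space p" and v: "v \<in> lp_space p"
  shows "u - v \<in> lp_space p"
proof -
  have su: "summable (\<lambda>m. norm (u m) powr p)" and sv: "summable (\<lambda>m. norm (v m) powr p)"
    using u v by (auto simp: lp_space_def)
  have b: "norm (norm ((u - v) m) powr p) \<le> 2 powr p * (norm (u m) powr p + norm (v m) powr p)" for m
  proof -
    have "norm (u m - v m) \<le> 2 * max (norm (u m)) (norm (v m))"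
      using norm_triangle_ineq4[of "u m" "v m"] by linarith
    hence "norm (u m - v m) powr p \<le> (2 * max (norm (u m)) (norm (v m))) powr p"
      using p by (intro powr_mono2) auto
    also have "\<dots> = 2 powr p * max (norm (u m)) (norm (v m)) powr p"
      by (simp add: powr_mult)
    also have "max (norm (u m)) (norm (v m)) powr p \<le> norm (u m) powr p + norm (v m) powr p"
      by (cases "norm (u m) \<le> norm (v m)") (auto simp: max_def)
    hence "2 powr p * max (norm (u m)) (norm (v m)) powr p \<le> 2 powr p * (norm (u m) powr p + norm (v m) powr p)"
      by (intro mult_left_mono) auto
    finally show ?thesis by simp
  qed
  have "summable (\<lambda>m. norm ((u - v) m) powr p)"
    by (rule summable_comparison_test[OF _ summable_mult[OF summable_add[OF su sv]]])
       (use b in auto)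
  thus ?thesis using u v by (simp add: lp_space_def)
qed

lemma lp_norm_lt_imp:
  assumes p: "p > 0" and s: "summable (\<lambda>m. norm (v m) powr p)" and lt: "lp_norm p v < d"
  shows "(\<Sum>m. norm (v m) powr p) < d powr p"
proof -
  define S where "S = (\<Sum>m. norm (v m) powr p)"
  have S0: "S \<ge> 0" unfolding S_def by (rule suminf_nonneg[OF s]) auto
  have "S = (S powr (1/p)) powr p" using S0 p by (simp add: powr_powr)
  also have "\<dots> < d powr p"
    using lt p unfolding lp_norm_def S_def[symmetric] by (intro powr_less_mono2) auto
  finally show ?thesis unfolding S_def .
qed

lemma lp_norm_lt_of:
  assumes p: "p > 0" and s: "summable (\<lambda>m. norm (v m) powr p)" and d: "d > 0"
    and lt: "(\<Sum>m. norm (v m) powr p) < d powr p"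
  shows "lp_norm p v < d"
proof -
  define S where "S = (\<Sum>m. norm (v m) powr p)"
  have S0: "S \<ge> 0" unfolding S_def by (rule suminf_nonneg[OF s]) auto
  have "lp_norm p v = S powr (1/p)" unfolding lp_norm_def S_def ..
  also have "\<dots> < (d powr p) powr (1/p)"
    using lt p S0 unfolding S_def[symmetric] by (intro powr_less_mono2) auto
  also have "\<dots> = d" using d p by (simp add: powr_powr)
  finally show ?thesis .
qed

lemma lp_norm_ge_coord:
  assumes p: "p > 0" and s: "summable (\<lambda>m. norm (v m) powr p)"
  shows "norm (v j) \<le> lp_norm p v"
proof -
  define S where "S = (\<Sum>m. norm (v m) powr p)"
  have "sum (\<lambda>m. norm (v m) powr p) {j} \<le> S"
    unfolding S_def by (rule sum_le_suminf[OF s]) auto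
  hence le: "norm (v j) powr p \<le> S" by simp
  have "norm (v j) = (norm (v j) powr p) powr (1/p)" using p by (simp add: powr_powr)
  also have "\<dots> \<le> S powr (1/p)" using le p by (intro powr_mono2) auto
  finally show ?thesis unfolding lp_norm_def S_def .
qed

lemma lp_small:
  fixes u :: "nat \<Rightarrow> 'a::real_normed_vector"
  assumes p: "p > 0" and u: "u \<in> lp_space p" and d: "d > 0"
  shows "eventually (\<lambda>j. norm (u j) < d) sequentially"
proof -
  have "(\<lambda>m. norm (u m) powr p) \<longlonglongrightarrow> 0"
    using u by (intro summable_LIMSEQ_zero) (auto simp: lp_space_def)
  hence "eventually (\<lambda>j. norm (u j) powr p < d powr p) sequentially"
    using d by (intro order_tendstoD) auto
  thus ?thesis
  proof (rule eventually_mono)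
    fix j assume h: "norm (u j) powr p < d powr p"
    show "norm (u j) < d"
    proof (rule ccontr)
      assume "\<not> norm (u j) < d"
      hence "d powr p \<le> norm (u j) powr p" using p d by (intro powr_mono2) auto
      thus False using h by simp
    qed
  qed
qed

lemma data_ge:
  assumes "pseudo_shift_data f w" and "m \<ge> 1"
  shows "f m \<ge> m + 1"
  using assms(2)
proof (induction m)
  case 0 thus ?case by simp
next
  case (Suc m)
  have sm: "strict_mono_on {1..} f" and f1: "f 1 > 1" using assms(1) by (auto simp: pseudo_shift_data_def)
  show ?case
  proof (cases "m = 0")
    case True thus ?thesis using f1 by simp
  next
    case False
    hence "f m \<ge> m + 1" using Suc by simp
    moreover have "f m < f (Suc m)" using sm False by (intro strict_mono_onD[OF sm]) auto
    ultimately show ?thesis by simp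
  qed
qed

lemma summable_reindex_nonneg:
  fixes g :: "nat \<Rightarrow> real"
  assumes g0: "\<And>n. g n \<ge> 0" and sg: "summable g" and sm: "strict_mono_on {1..} f"
  shows "summable (\<lambda>m. if m = 0 then 0 else g (f m))"
proof (rule summableI_nonneg_bounded)
  show "0 \<le> (if m = 0 then 0 else g (f m))" for m using g0 by auto
  fix M
  have inj: "inj_on f {1..<M}"
    using sm by (intro inj_onI) (metis atLeastLessThan_iff atLeast_iff linorder_neqE_nat strict_mono_onD less_irrefl)
  have "sum (\<lambda>m. if m = 0 then 0 else g (f m)) {..<M} = sum (\<lambda>m. if m = 0 then 0 else g (f m)) {1..<M}"
    by (rule sum.mono_neutral_right) auto
  also have "\<dots> = sum (\<lambda>m. g (f m)) {1..<M}" by (rule sum.cong) auto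
  also have "\<dots> = sum g (f ` {1..<M})" using inj by (simp add: sum.reindex)
  also have "\<dots> \<le> suminf g" using sg g0 by (intro sum_le_suminf) auto
  finally show "sum (\<lambda>m. if m = 0 then 0 else g (f m)) {..<M} \<le> suminf g" .
qed

lemma shift_lp:
  fixes w :: "nat \<Rightarrow> 'a::real_normed_field"
  assumes p: "p > 0" and d: "pseudo_shift_data f w" and x: "x \<in> lp_space p"
  shows "pseudo_shift f w x \<in> lp_space p"
proof -
  obtain B where B: "\<And>m. m \<ge> 1 \<Longrightarrow> norm (w (f m)) \<le> B" and sm: "strict_mono_on {1..} f"
    using d by (auto simp: pseudo_shift_data_def)
  have sx: "summable (\<lambda>m. norm (x m) powr p)" using x by (auto simp: lp_space_def)
  have s2: "summable (\<lambda>m. if m = 0 then 0 else norm (x (f m)) powr p)"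
    by (rule summable_reindex_nonneg[OF _ sx sm]) auto
  have "summable (\<lambda>m. norm (pseudo_shift f w x m) powr p)"
  proof (rule summable_comparison_test[OF _ summable_mult[OF s2, of "B powr p"]])
    show "\<exists>N. \<forall>n\<ge>N. norm (norm (pseudo_shift f w x n) powr p) \<le> B powr p * (if n = 0 then 0 else norm (x (f n)) powr p)"
    proof (intro exI allI impI)
      fix n :: nat
      show "norm (norm (pseudo_shift f w x n) powr p) \<le> B powr p * (if n = 0 then 0 else norm (x (f n)) powr p)"
      proof (cases "n = 0")
        case True thus ?thesis by (simp add: pseudo_shift_def)
      next
        case False
        have "norm (w (f n)) powr p \<le> B powr p" using B[of n] False p by (intro powr_mono2) auto
        hence "norm (w (f n)) powr p * norm (x (f n)) powr p \<le> B powr p * norm (x (f n)) powr p"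
          by (intro mult_right_mono) auto
        thus ?thesis using False by (simp add: pseudo_shift_def norm_mult powr_mult)
      qed
    qed
  qed
  thus ?thesis by (simp add: lp_space_def pseudo_shift_def)
qed

lemma iter_lp:
  fixes T :: "(nat \<Rightarrow> 'a::real_normed_vector) \<Rightarrow> (nat \<Rightarrow> 'a)"
  assumes "\<And>u. u \<in> lp_space p \<Longrightarrow> T u \<in> lp_space p" and "x \<in> lp_space p"
  shows "(T ^^ n) x \<in> lp_space p"
proof (induction n)
  case 0 show ?case using assms(2) by simp
next
  case (Suc n) show ?case using assms(1)[OF Suc.IH] by simp
qed

lemma agree_iter:
  fixes w :: "nat \<Rightarrow> 'a::real_normed_field"
  assumes d: "pseudo_shift_data f w" and ag: "\<And>m. m \<ge> a \<Longrightarrow> u m = v m"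
  shows "m \<ge> a - n \<Longrightarrow> (pseudo_shift f w ^^ n) u m = (pseudo_shift f w ^^ n) v m"
proof (induction n arbitrary: m)
  case 0 thus ?case using ag by simp
next
  case (Suc n)
  show ?case
  proof (cases "m = 0")
    case True thus ?thesis by (simp add: pseudo_shift_def)
  next
    case False
    hence "f m \<ge> m + 1" using data_ge[OF d] by simp
    hence "f m \<ge> a - n" using Suc.prems by simp
    hence e: "(pseudo_shift f w ^^ n) u (f m) = (pseudo_shift f w ^^ n) v (f m)" by (rule Suc.IH)
    have "(pseudo_shift f w ^^ Suc n) u m = w (f m) * (pseudo_shift f w ^^ n) u (f m)"
      using False unfolding funpow.simps o_apply pseudo_shift_def[of f w "(pseudo_shift f w ^^ n) u"] by simp
    also have "\<dots> = w (f m) * (pseudo_shift f w ^^ n) v (f m)" using e by simp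
    also have "\<dots> = (pseudo_shift f w ^^ Suc n) v m"
      using False unfolding funpow.simps o_apply pseudo_shift_def[of f w "(pseudo_shift f w ^^ n) v"] by simp
    finally show ?thesis .
  qed
qed

lemma core:
  fixes T :: "nat \<Rightarrow> (nat \<Rightarrow> 'a::real_normed_field) \<Rightarrow> (nat \<Rightarrow> 'a)"
  assumes p: "p \<ge> 1" and N: "N > 0" and TL: "\<And>i u. i < N \<Longrightarrow> u \<in> lp_space p \<Longrightarrow> T i u \<in> lp_space p"
    and hx: "s_hypercyclic_vector p N T x" and y: "y \<in> lp_space p" and e: "e > 0"
  shows "\<exists>n\<ge>K. \<forall>i<N. lp_norm p ((T i ^^ n) x - y) < e"
proof -
  have p0: "p > 0" using p by simp
  have x: "x \<in> lp_space p" using hx by (simp add: s_hypercyclic_vector_def)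
  have Tx: "\<And>i n. i < N \<Longrightarrow> (T i ^^ n) x \<in> lp_space p"
    by (rule iter_lp[OF _ x]) (rule TL)
  define d where "d = e / 4"
  have d0: "d > 0" using e by (simp add: d_def)
  have ev1: "eventually (\<lambda>j. \<forall>n\<in>{..<K}. norm ((T 0 ^^ n) x j) < d/2) sequentially"
  proof (intro eventually_ball_finite ballI)
    fix n show "eventually (\<lambda>j. norm ((T 0 ^^ n) x j) < d/2) sequentially"
      by (rule lp_small[OF p0 Tx[OF N]]) (simp add: d0)
  qed simp
  have ev2: "eventually (\<lambda>j. norm (y j) < d/2) sequentially"
    by (rule lp_small[OF p0 y]) (simp add: d0)
  obtain j where j1: "j \<ge> 1" and hj1: "\<forall>n<K. norm ((T 0 ^^ n) x j) < d/2" and hj2: "norm (y j) < d/2"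
  proof -
    from eventually_conj[OF ev1 ev2] obtain M where "\<forall>j\<ge>M. (\<forall>n\<in>{..<K}. norm ((T 0 ^^ n) x j) < d/2) \<and> norm (y j) < d/2"
      by (auto simp: eventually_sequentially)
    thus ?thesis using that[of "max M 1"] by auto
  qed
  define y' where "y' = y(j := y j + of_real (2*d))"
  have y'lp: "y' \<in> lp_space p"
  proof -
    have "eventually (\<lambda>m. norm (y' m) powr p = norm (y m) powr p) sequentially"
      unfolding eventually_sequentially by (rule exI[of _ "Suc j"]) (auto simp: y'_def)
    hence "summable (\<lambda>m. norm (y' m) powr p)" using y by (simp add: summable_cong lp_space_def)
    thus ?thesis using y j1 by (auto simp: lp_space_def y'_def)
  qed
  obtain n where n1: "n \<ge> 1" and H: "\<forall>i<N. lp_norm p ((T i ^^ n) x - y') < d"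
    using hx y'lp d0 unfolding s_hypercyclic_vector_def by blast
  have coord: "norm ((T i ^^ n) x j - y' j) < d" if i: "i < N" for i
  proof -
    have "(T i ^^ n) x - y' \<in> lp_space p" by (rule lp_diff[OF p0 Tx[OF i] y'lp])
    hence "norm (((T i ^^ n) x - y') j) \<le> lp_norm p ((T i ^^ n) x - y')"
      by (intro lp_norm_ge_coord[OF p0]) (auto simp: lp_space_def)
    moreover have "((T i ^^ n) x - y') j = (T i ^^ n) x j - y' j" by simp
    ultimately show ?thesis using H i by force
  qed
  have y'j: "y' j = y j + of_real (2*d)" by (simp add: y'_def)
  have nK: "n \<ge> K"
  proof (rule ccontr)
    assume "\<not> n \<ge> K"
    hence nk: "n < K" by simp
    define a where "a = (T 0 ^^ n) x j"
    have "norm (a - y' j) < d" using coord[OF N] by (simp add: a_def)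
    moreover have "norm (a - y' j) \<ge> 2*d - norm a - norm (y j)"
    proof -
      have "norm (of_real (2*d) :: 'a) \<le> norm (a - y' j) + norm a + norm (y j)"
        using norm_triangle_ineq4[of "a - y' j" a] norm_triangle_ineq[of "a - y' j - a" "y j"]
        unfolding y'j by (smt (verit) add_diff_cancel_left' diff_add_cancel minus_diff_eq norm_minus_cancel)
      thus ?thesis using d0 by simp
    qed
    moreover have "norm a < d/2" using hj1 nk by (simp add: a_def)
    ultimately show False using hj2 by linarith
  qed
  show ?thesis
  proof (intro exI[of _ n] conjI allI impI nK)
    fix i assume i: "i < N"
    define u where "u = (T i ^^ n) x"
    have ul: "u \<in> lp_space p" using Tx[OF i] by (simp add: u_def)
    define g where "g = (\<lambda>m. norm (u m - y m) powr p)"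
    define h where "h = (\<lambda>m. norm (u m - y' m) powr p)"
    have sg: "summable g" using lp_diff[OF p0 ul y] by (simp add: g_def lp_space_def)
    have sh: "summable h" using lp_diff[OF p0 ul y'lp] by (simp add: h_def lp_space_def)
    have hlt: "suminf h < d powr p"
      using lp_norm_lt_imp[OF p0, of "u - y'" d] sh H i by (simp add: h_def u_def)
    have single: "(\<lambda>m. if m = j then g m else 0) sums g j" by (rule sums_single)
    have le: "g m \<le> h m + (if m = j then g m else 0)" for m
      by (cases "m = j") (auto simp: g_def h_def y'_def)
    have "suminf g \<le> suminf (\<lambda>m. h m + (if m = j then g m else 0))"
      by (rule suminf_le[OF le sg summable_add[OF sh sums_summable[OF single]]])
    also have "\<dots> = suminf h + g j"
      using suminf_add[OF sh sums_summable[OF single]] sums_unique[OF single] by simp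
    finally have s1: "suminf g \<le> suminf h + g j" .
    have "norm (u j - y j) \<le> norm (u j - y' j) + norm (of_real (2*d) :: 'a)"
      unfolding y'j using norm_triangle_ineq[of "u j - (y j + of_real (2*d))" "of_real (2*d)"]
      by (simp add: algebra_simps)
    hence "norm (u j - y j) < 3 * d" using coord[OF i] d0 by (simp add: u_def)
    hence "g j \<le> (3*d) powr p" unfolding g_def using p0 by (intro powr_mono2) auto
    hence "suminf g < d powr p + (3*d) powr p" using s1 hlt by linarith
    also have "d powr p = (1/4) powr p * e powr p" using e by (simp add: d_def powr_divide)
    also have "(3*d) powr p = (3/4) powr p * e powr p" using e by (simp add: d_def powr_divide powr_mult)
    also have "(1/4) powr p * e powr p + (3/4) powr p * e powr p \<le> (1/4) * e powr p + (3/4) * e powr p"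
      using p by (intro add_mono mult_right_mono powr_le_one_le) auto
    also have "\<dots> = e powr p" by simp
    finally have "suminf g < e powr p" .
    thus "lp_norm p ((T i ^^ n) x - y) < e"
      using lp_norm_lt_of[OF p0 _ e, of "u - y"] sg by (simp add: g_def u_def)
  qed
qed

theorem corollary3p4:
  fixes p :: real and N :: nat
    and fs :: "nat \<Rightarrow> nat \<Rightarrow> nat"
    and ws :: "nat \<Rightarrow> nat \<Rightarrow> 'a::{real_normed_field, banach}"
  assumes "1 \<le> p" and "N \<ge> 2"
    and "\<And>i. i < N \<Longrightarrow> pseudo_shift_data (fs i) (ws i)"
  shows "s_hypercyclic p N (\<lambda>i. pseudo_shift (fs i) (ws i)) \<longleftrightarrow>
         densely_s_hypercyclic p N (\<lambda>i. pseudo_shift (fs i) (ws i))"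
proof
  let ?T = "\<lambda>i. pseudo_shift (fs i) (ws i)"
  have p0: "p > 0" using assms(1) by simp
  assume "s_hypercyclic p N ?T"
  then obtain x where hx: "s_hypercyclic_vector p N ?T x" by (auto simp: s_hypercyclic_def)
  have x: "x \<in> lp_space p" using hx by (simp add: s_hypercyclic_vector_def)
  show "densely_s_hypercyclic p N ?T"
    unfolding densely_s_hypercyclic_def
  proof (intro ballI allI impI)
    fix z :: "nat \<Rightarrow> 'a" and e :: real
    assume z: "z \<in> lp_space p" and e: "e > 0"
    define g where "g = (\<lambda>m. norm (x m - z m) powr p)"
    have sg: "summable g" using lp_diff[OF p0 x z] by (simp add: g_def lp_space_def)
    obtain K where K: "\<forall>n\<ge>K. norm (\<Sum>i. g (i + n)) < e powr p"
      using suminf_exist_split[OF _ sg, of "e powr p"] e by auto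
    define x' where "x' m = (if m \<le> K then z m else x m)" for m
    have ev: "eventually (\<lambda>m. norm (x' m) powr p = norm (x m) powr p) sequentially"
      unfolding eventually_sequentially by (rule exI[of _ "Suc K"]) (auto simp: x'_def)
    have x'l: "x' \<in> lp_space p"
      using x z ev summable_cong[OF ev] by (auto simp: lp_space_def x'_def)
    define h where "h m = (if m \<le> K then 0 else g m)" for m
    have hx': "norm ((x' - z) m) powr p = h m" for m by (simp add: x'_def h_def g_def)
    have evh: "eventually (\<lambda>m. h m = g m) sequentially"
      unfolding eventually_sequentially by (rule exI[of _ "Suc K"]) (auto simp: h_def)
    have sh: "summable h" using summable_cong[OF evh] sg by simp
    have "suminf h = (\<Sum>i. h (i + Suc K)) + sum h {..<Suc K}"
      by (rule suminf_split_initial_segment[OF sh])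
    also have "sum h {..<Suc K} = 0" by (simp add: h_def)
    also have "(\<Sum>i. h (i + Suc K)) = (\<Sum>i. g (i + Suc K))" by (simp add: h_def)
    finally have "suminf h = (\<Sum>i. g (i + Suc K))" by simp
    also have "\<dots> \<le> norm (\<Sum>i. g (i + Suc K))" by simp
    also have "\<dots> < e powr p" using K[rule_format, of "Suc K"] by simp
    finally have "suminf h < e powr p" .
    moreover have hfun: "(\<lambda>m. norm (x' m - z m) powr p) = h" using hx' by (auto simp: fun_eq_iff)
    ultimately have "lp_norm p (x' - z) < e"
      using lp_norm_lt_of[OF p0 _ e, of "x' - z"] sh by (simp add: hfun)
    moreover have "s_hypercyclic_vector p N ?T x'"
      unfolding s_hypercyclic_vector_def
    proof (intro conjI ballI allI impI x'l)
      fix y :: "nat \<Rightarrow> 'a" and \<epsilon> :: real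
      assume y: "y \<in> lp_space p" and \<epsilon>: "\<epsilon> > 0"
      obtain n where n: "n \<ge> Suc K" and Hn: "\<forall>i<N. lp_norm p ((?T i ^^ n) x - y) < \<epsilon>"
        using core[OF assms(1) _ _ hx y \<epsilon>, of "Suc K"] assms(2,3) shift_lp[OF p0] by fastforce
      have eq: "(?T i ^^ n) x' = (?T i ^^ n) x" if i: "i < N" for i
      proof
        fix m
        show "(?T i ^^ n) x' m = (?T i ^^ n) x m"
          by (rule agree_iter[OF assms(3)[OF i], of "Suc K"]) (use n in \<open>auto simp: x'_def\<close>)
      qed
      show "\<exists>n\<ge>1. \<forall>i<N. lp_norm p ((?T i ^^ n) x' - y) < \<epsilon>"
        using n Hn eq by (intro exI[of _ n]) auto
    qed
    ultimately show "\<exists>x. s_hypercyclic_vector p N ?T x \<and> lp_norm p (x - z) < e" by blast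
  qed
next
  let ?T = "\<lambda>i. pseudo_shift (fs i) (ws i)"
  assume "densely_s_hypercyclic p N ?T"
  moreover have "(\<lambda>_. 0 :: 'a) \<in> lp_space p" by (simp add: lp_space_def)
  ultimately show "s_hypercyclic p N ?T"
    unfolding densely_s_hypercyclic_def s_hypercyclic_def by (meson zero_less_one)
qed

end
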